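(* The pair $(\ell_2^2, C[0,1])$ fails the uniform sBPBp.
   Context: Scalars $\mathbb{K}=\mathbb{R}$ or $\mathbb{C}$; $\ell_2^2$ is $\mathbb{K}^2$ with the Euclidean norm; $C[0,1]$ is the space of continuous $\mathbb{K}$-valued functions on $[0,1]$ with the sup norm; $S_X$ is the unit sphere of $X$ and $\mathcal{L}(X,Y)$ the bounded linear operators. A pair of Banach spaces $(X,Y)$ has the uniform strong Bishop–Phelps–Bollobás property (uniform sBPBp) if for every $\varepsilon>0$ there exists $\eta(\varepsilon)>0$ such that whenever $T\in\mathcal{L}(X,Y)$ with $\|T\|=1$ and $x_0\in S_X$ satisfy $\|T(x_0)\|>1-\eta(\varepsilon)$, there exists $x_1\in S_X$ with $\|T(x_1)\|=1$ and $\|x_1-x_0\|<\varepsilon$. *)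

theory Defs
  imports "HOL-Analysis.Analysis"
begin

text \<open>The space ell_2^2 over the scalar field 'k is the type 'k^2 (its library norm is the
Euclidean norm).  An element of C[0,1] is represented by a function real => 'k that is continuous
on [0,1]; its norm is the sup norm over [0,1].\<close>

definition sup_norm01 :: "(real \<Rightarrow> 'k::real_normed_field) \<Rightarrow> real" where
  "sup_norm01 g = (SUP t\<in>{0..1::real}. norm (g t))"

definition is_op_l22_C01 :: "('k::real_normed_field ^ 2 \<Rightarrow> (real \<Rightarrow> 'k)) \<Rightarrow> bool" where
  "is_op_l22_C01 T \<longleftrightarrow>
     (\<forall>x. continuous_on {0..1} (T x)) \<and>
     (\<forall>x y. T (x + y) = (\<lambda>t. T x t + T y t)) \<and>
     (\<forall>(c::'k) x. T (c *s x) = (\<lambda>t. c * T x t)) \<and>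
     (\<exists>K. \<forall>x. sup_norm01 (T x) \<le> K * norm x)"

definition op_norm_l22_C01 :: "('k::real_normed_field ^ 2 \<Rightarrow> (real \<Rightarrow> 'k)) \<Rightarrow> real" where
  "op_norm_l22_C01 T = (SUP x\<in>{x. norm x \<le> 1}. sup_norm01 (T x))"

definition uniform_sBPBp_l22_C01 :: "'k::real_normed_field itself \<Rightarrow> bool" where
  "uniform_sBPBp_l22_C01 (_ :: 'k itself) \<longleftrightarrow>
     (\<forall>\<epsilon>>0. \<exists>\<eta>>0. \<forall>(T :: 'k ^ 2 \<Rightarrow> (real \<Rightarrow> 'k)) (x0 :: 'k ^ 2).
        is_op_l22_C01 T \<and> op_norm_l22_C01 T = 1 \<and> norm x0 = 1 \<and>
        sup_norm01 (T x0) > 1 - \<eta> \<longrightarrow>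
        (\<exists>x1 :: 'k ^ 2. norm x1 = 1 \<and> sup_norm01 (T x1) = 1 \<and> norm (x1 - x0) < \<epsilon>))"

end

theory Submission
  imports Defs
begin

lemma sup_le01: "(\<And>t. t\<in>{0..1} \<Longrightarrow> norm (g t) \<le> M) \<Longrightarrow> sup_norm01 g \<le> M"
  unfolding sup_norm01_def by (rule cSUP_least) auto

lemma sup_ge01: "(\<And>t. t\<in>{0..1} \<Longrightarrow> norm (g t) \<le> M) \<Longrightarrow> s\<in>{0..1::real} \<Longrightarrow> norm (g s) \<le> sup_norm01 g"
  unfolding sup_norm01_def by (rule cSUP_upper) (auto intro!: bdd_aboveI2[where M=M])

definition TT :: "real \<Rightarrow> 'k::real_normed_field ^ 2 \<Rightarrow> real \<Rightarrow> 'k" where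
  "TT d x = (\<lambda>t. of_real ((1-d)*(1-t)) * x$1 + of_real t * x$2)"

lemma TT_pt:
  assumes "t\<in>{0..1}" "0\<le>d" "d\<le>1"
  shows "norm (TT d x t) \<le> (1-d)*(1-t)*norm (x$1) + t*norm (x$2)"
proof -
  have "norm (TT d x t) \<le> norm (of_real ((1-d)*(1-t)) * x$1) + norm (of_real t * x$2)"
    unfolding TT_def by (rule norm_triangle_ineq)
  also have "\<dots> = (1-d)*(1-t)*norm (x$1) + t*norm (x$2)"
    using assms unfolding norm_mult norm_of_real by simp
  finally show ?thesis .
qed

lemma n2: "norm (x::'k::real_normed_field^2) = sqrt (norm(x$1)^2+norm(x$2)^2)"
  unfolding norm_vec_def L2_set_def by (simp add: UNIV_2)

lemma comp_le: "norm ((x::'k::real_normed_field^2)$i) \<le> norm x"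
proof -
  have a: "norm (x$1) \<le> norm x" unfolding n2 by (rule real_le_rsqrt) simp
  have b: "norm (x$2) \<le> norm x" unfolding n2 by (rule real_le_rsqrt) simp
  show ?thesis using a b by (metis exhaust_2)
qed

lemma cvx: "0\<le>(t::real) \<Longrightarrow> t\<le>1 \<Longrightarrow> 0\<le>c \<Longrightarrow> c\<le>1 \<Longrightarrow> a \<le> M \<Longrightarrow> b \<le> M \<Longrightarrow> 0\<le>a \<Longrightarrow>
   c*(1-t)*a + t*b \<le> M"
proof -
  assume h: "0\<le>t" "t\<le>1" "0\<le>c" "c\<le>1" "a\<le>M" "b\<le>M" "0\<le>a"
  have "c*(1-t)*a \<le> (1-t)*a" using h mult_right_mono[of c 1 "(1-t)*a"] by (simp add: mult.assoc)
  also have "\<dots> \<le> (1-t)*M" using h by (simp add: mult_left_mono)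
  finally have "c*(1-t)*a \<le> (1-t)*M" .
  moreover have "t*b \<le> t*M" using h by (simp add: mult_left_mono)
  ultimately show ?thesis by (simp add: algebra_simps)
qed

lemma generic: "\<not> uniform_sBPBp_l22_C01 TYPE('k::real_normed_field)"
proof
  assume U: "uniform_sBPBp_l22_C01 TYPE('k)"
  then obtain \<eta> where eta: "\<eta> > 0" and H: "\<And>(T :: 'k ^ 2 \<Rightarrow> (real \<Rightarrow> 'k)) (x0 :: 'k ^ 2).
        is_op_l22_C01 T \<and> op_norm_l22_C01 T = 1 \<and> norm x0 = 1 \<and>
        sup_norm01 (T x0) > 1 - \<eta> \<Longrightarrow>
        (\<exists>x1 :: 'k ^ 2. norm x1 = 1 \<and> sup_norm01 (T x1) = 1 \<and> norm (x1 - x0) < 1)"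
    unfolding uniform_sBPBp_l22_C01_def by (metis zero_less_one)
  define d where "d = min (\<eta>/2) (1/2)"
  have d: "0 < d" "d \<le> 1/2" "d < \<eta>" using eta by (auto simp: d_def)
  define T :: "'k ^ 2 \<Rightarrow> real \<Rightarrow> 'k" where "T = TT d"
  have pt: "norm (T x t) \<le> (1-d)*(1-t)*norm (x$1) + t*norm (x$2)" if "t\<in>{0..1}" for x t
    unfolding T_def using TT_pt[OF that, of d x] d by simp
  have ptn: "norm (T x t) \<le> norm x" if "t\<in>{0..1}" for x t
  proof -
    have "(1-d)*(1-t)*norm (x$1) + t*norm (x$2) \<le> norm x"
      by (rule cvx) (use that d comp_le in auto)
    thus ?thesis using pt[OF that, of x] by linarith
  qed
  have op: "is_op_l22_C01 T"
    unfolding is_op_l22_C01_def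
  proof (intro conjI allI exI)
    fix x show "continuous_on {0..1} (T x)" unfolding T_def TT_def
      by (intro continuous_intros)
  next
    fix x y show "T (x + y) = (\<lambda>t. T x t + T y t)"
      unfolding T_def TT_def by (auto simp: algebra_simps)
  next
    fix c :: 'k and x show "T (c *s x) = (\<lambda>t. c * T x t)"
      unfolding T_def TT_def by (auto simp: algebra_simps)
  next
    fix x show "sup_norm01 (T x) \<le> 1 * norm x"
      using sup_le01[of "T x" "norm x"] ptn by auto
  qed
  define e2 :: "'k^2" where "e2 = axis 2 1"
  have ne2: "norm e2 = 1" unfolding e2_def by (simp add: n2 axis_def)
  have "T e2 1 = 1" unfolding T_def TT_def e2_def by (simp add: axis_def)
  hence s2: "1 \<le> sup_norm01 (T e2)"
    using sup_ge01[of "T e2" 1 1] ptn[of _ e2] ne2 by auto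
  have opn: "op_norm_l22_C01 T = 1"
  proof -
    have b: "sup_norm01 (T x) \<le> 1" if "norm x \<le> 1" for x
      using sup_le01[of "T x" 1] ptn[of _ x] that by force
    have "op_norm_l22_C01 T \<le> 1" unfolding op_norm_l22_C01_def
      by (rule cSUP_least) (auto intro: b exI[of _ 0])
    moreover have "sup_norm01 (T e2) \<le> op_norm_l22_C01 T" unfolding op_norm_l22_C01_def
      by (rule cSUP_upper) (use ne2 b in \<open>auto intro!: bdd_aboveI2\<close>)
    ultimately show ?thesis using s2 by linarith
  qed
  define e1 :: "'k^2" where "e1 = axis 1 1"
  have ne1: "norm e1 = 1" unfolding e1_def by (simp add: n2 axis_def)
  have "T e1 0 = of_real (1-d)" unfolding T_def TT_def e1_def by (simp add: axis_def)
  hence "norm (T e1 0) = 1 - d" using d by (simp only: norm_of_real)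
  hence "1 - d \<le> sup_norm01 (T e1)"
    using sup_ge01[of "T e1" 1 0] ptn[of _ e1] ne1 d by auto
  hence "sup_norm01 (T e1) > 1 - \<eta>" using d by linarith
  then obtain x1 :: "'k^2" where x1: "norm x1 = 1" "sup_norm01 (T x1) = 1" "norm (x1 - e1) < 1"
    using H[of T e1] op opn ne1 by blast
  have "(x1 - e1)$2 = x1$2" unfolding e1_def by (simp add: axis_def)
  hence b1: "norm (x1$2) < 1" using comp_le[of "x1 - e1" 2] x1 by simp
  define M where "M = max ((1-d)*norm (x1$1)) (norm (x1$2))"
  have "(1-d)*norm (x1$1) \<le> (1-d)"
    using comp_le[of x1 1] x1(1) d mult_left_mono[of "norm (x1$1)" 1 "1-d"] by auto
  hence m1: "(1-d)*norm (x1$1) < 1" using d by linarith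
  have M1: "M < 1" unfolding M_def using b1 m1 by simp
  have "norm (T x1 t) \<le> M" if "t\<in>{0..1}" for t
  proof -
    have "(1-d)*(1-t)*norm (x1$1) + t*norm (x1$2) \<le> M"
    proof -
      have "1*(1-t)*((1-d)*norm (x1$1)) + t*norm (x1$2) \<le> M"
        using that d by (intro cvx) (auto simp: M_def)
      thus ?thesis by (simp add: algebra_simps)
    qed
    thus ?thesis using pt[OF that, of x1] by linarith
  qed
  hence "sup_norm01 (T x1) \<le> M" by (rule sup_le01)
  thus False using M1 x1 by linarith
qed

theorem mainTheorem13:
  shows "\<not> uniform_sBPBp_l22_C01 TYPE(real) \<and> \<not> uniform_sBPBp_l22_C01 TYPE(complex)"
  using generic[where 'k=real] generic[where 'k=complex] by blast

end
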